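(* Let $n\ge1$. Every configuration in $\Omega'_n$ can be divided uniquely into rectangular blocks of sizes $n\times n$, $n\times(n+1)$, $(n+1)\times n$ and $(n+1)\times(n+1)$, each containing a unique junction tile (tile of $J'_n$), located at its lower left corner.
   Context: $V_n=\{(v_0,v_1,v_2)\in\mathbb{Z}^3: 0\le v_0\le v_1\le 1,\ v_1\le v_2\le n+1\}$, elements written as words $v_0v_1v_2$. A Wang tile is $t=(a,b,c,d)$ with $\mathrm{RIGHT}(t)=a$, $\mathrm{TOP}(t)=b$, $\mathrm{LEFT}(t)=c$, $\mathrm{BOTTOM}(t)=d$; $\hat t=(b,a,d,c)$, $\hat S=\{\hat t:t\in S\}$. Define (as (right, top, left, bottom)): $W_n=\{(11(i+1),11(j+1),11i,11j):1\le i,j\le n\}$; $B'_n=\{(00(i+1),111,00i,11n):0\le i\le n\}$; $G_n=\{(01(i+1),111,00i,11(n+1)):0\le i\le n\}$; $Y_n=\{(01(i+1),112,01i,11(n+1)):1\le i\le n\}$; $A_n=\{(00(i+1),112,01i,11n):1\le i\le n\}$; $J'_n=\{((0,k,l),(0,r,s),(0,s,r+n),(0,l,k+n)):(k,l),(r,s)\in\{(0,0),(0,1),(1,1)\}\}$ (junction tiles). $\mathcal T'_n=W_n\cup B'_n\cup G_n\cup Y_n\cup A_n\cup\hat B'_n\cup\hat G_n\cup\hat Y_n\cup\hat A_n\cup J'_n$. $\Omega'_n$ is the set of configurations $x:\mathbb Z^2\to\mathcal T'_n$ with $\mathrm{RIGHT}(x(\mathbf m))=\mathrm{LEFT}(x(\mathbf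 m+\mathbf e_1))$ and $\mathrm{TOP}(x(\mathbf m))=\mathrm{BOTTOM}(x(\mathbf m+\mathbf e_2))$ for all $\mathbf m$. *)

theory Defs
  imports Main
begin

text \<open>Colours are integer triples v0 v1 v2 (the word v0v1v2). A Wang tile is a
quadruple (RIGHT, TOP, LEFT, BOTTOM).\<close>

type_synonym colour = "int \<times> int \<times> int"
type_synonym tile = "colour \<times> colour \<times> colour \<times> colour"

definition V :: "nat \<Rightarrow> colour set" where
  "V n = {(v0, v1, v2). 0 \<le> v0 \<and> v0 \<le> v1 \<and> v1 \<le> 1 \<and> v1 \<le> v2 \<and> v2 \<le> int n + 1}"

fun RIGHT :: "tile \<Rightarrow> colour" where "RIGHT (a, b, c, d) = a"
fun TOP :: "tile \<Rightarrow> colour" where "TOP (a, b, c, d) = b"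
fun LEFT :: "tile \<Rightarrow> colour" where "LEFT (a, b, c, d) = c"
fun BOTTOM :: "tile \<Rightarrow> colour" where "BOTTOM (a, b, c, d) = d"

fun hat :: "tile \<Rightarrow> tile" where "hat (a, b, c, d) = (b, a, d, c)"

definition W :: "nat \<Rightarrow> tile set" where
  "W n = {((1,1,i+1), (1,1,j+1), (1,1,i), (1,1,j)) | i j. 1 \<le> i \<and> i \<le> int n \<and> 1 \<le> j \<and> j \<le> int n}"

definition B' :: "nat \<Rightarrow> tile set" where
  "B' n = {((0,0,i+1), (1,1,1), (0,0,i), (1,1,int n)) | i. 0 \<le> i \<and> i \<le> int n}"

definition G :: "nat \<Rightarrow> tile set" where
  "G n = {((0,1,i+1), (1,1,1), (0,0,i), (1,1,int n + 1)) | i. 0 \<le> i \<and> i \<le> int n}"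

definition Y :: "nat \<Rightarrow> tile set" where
  "Y n = {((0,1,i+1), (1,1,2), (0,1,i), (1,1,int n + 1)) | i. 1 \<le> i \<and> i \<le> int n}"

definition A :: "nat \<Rightarrow> tile set" where
  "A n = {((0,0,i+1), (1,1,2), (0,1,i), (1,1,int n)) | i. 1 \<le> i \<and> i \<le> int n}"

definition junction_pairs :: "(int \<times> int) set" where
  "junction_pairs = {(0,0), (0,1), (1,1)}"

definition J' :: "nat \<Rightarrow> tile set" where
  "J' n = {((0,k,l), (0,r,s), (0,s,r + int n), (0,l,k + int n)) | k l r s.
             (k, l) \<in> junction_pairs \<and> (r, s) \<in> junction_pairs}"

definition T' :: "nat \<Rightarrow> tile set" where
  "T' n = W n \<union> B' n \<union> G n \<union> Y n \<union> A n
          \<union> hat ` B' n \<union> hat ` G n \<union> hat ` Y n \<union> hat ` A n \<union> J' n"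

definition Omega' :: "nat \<Rightarrow> (int \<times> int \<Rightarrow> tile) set" where
  "Omega' n = {x. (\<forall>m. x m \<in> T' n) \<and>
     (\<forall>a b. RIGHT (x (a, b)) = LEFT (x (a + 1, b)) \<and> TOP (x (a, b)) = BOTTOM (x (a, b + 1)))}"

text \<open>A block is ((p1, p2), (w, h)): lower left corner (p1, p2), width w (horizontal
extent) and height h (vertical extent); it occupies [p1, p1+w) x [p2, p2+h).\<close>
type_synonym block = "(int \<times> int) \<times> (int \<times> int)"

fun cells :: "block \<Rightarrow> (int \<times> int) set" where
  "cells ((p1, p2), (w, h)) = {(a, b). p1 \<le> a \<and> a < p1 + w \<and> p2 \<le> b \<and> b < p2 + h}"

fun corner :: "block \<Rightarrow> int \<times> int" where
  "corner ((p1, p2), (w, h)) = (p1, p2)"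

fun block_size :: "block \<Rightarrow> int \<times> int" where
  "block_size ((p1, p2), (w, h)) = (w, h)"

definition good_division :: "nat \<Rightarrow> (int \<times> int \<Rightarrow> tile) \<Rightarrow> block set \<Rightarrow> bool" where
  "good_division n x D \<longleftrightarrow>
     (\<forall>B\<in>D. fst (block_size B) \<in> {int n, int n + 1} \<and> snd (block_size B) \<in> {int n, int n + 1}) \<and>
     (\<forall>m. \<exists>!B. B \<in> D \<and> m \<in> cells B) \<and>
     (\<forall>B\<in>D. x (corner B) \<in> J' n \<and> (\<forall>m\<in>cells B. x m \<in> J' n \<longrightarrow> m = corner B))"

end

theory Submission
  imports Defs
begin

lemma T'E:
  assumes "t \<in> T' n"
  obtains (W) i j where "t = ((1,1,i+1),(1,1,j+1),(1,1,i),(1,1,j))" "1 \<le> i" "i \<le> int n" "1 \<le> j" "j \<le> int n"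
  | (B) i where "t = ((0,0,i+1),(1,1,1),(0,0,i),(1,1,int n))" "0 \<le> i" "i \<le> int n"
  | (G) i where "t = ((0,1,i+1),(1,1,1),(0,0,i),(1,1,int n + 1))" "0 \<le> i" "i \<le> int n"
  | (Y) i where "t = ((0,1,i+1),(1,1,2),(0,1,i),(1,1,int n + 1))" "1 \<le> i" "i \<le> int n"
  | (A) i where "t = ((0,0,i+1),(1,1,2),(0,1,i),(1,1,int n))" "1 \<le> i" "i \<le> int n"
  | (hB) i where "t = ((1,1,1),(0,0,i+1),(1,1,int n),(0,0,i))" "0 \<le> i" "i \<le> int n"
  | (hG) i where "t = ((1,1,1),(0,1,i+1),(1,1,int n + 1),(0,0,i))" "0 \<le> i" "i \<le> int n"
  | (hY) i where "t = ((1,1,2),(0,1,i+1),(1,1,int n + 1),(0,1,i))" "1 \<le> i" "i \<le> int n"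
  | (hA) i where "t = ((1,1,2),(0,0,i+1),(1,1,int n),(0,1,i))" "1 \<le> i" "i \<le> int n"
  | (J) k l r s where "t = ((0,k,l),(0,r,s),(0,s,r + int n),(0,l,k + int n))"
      "(k, l) \<in> {(0,0),(0,1),(1,1)}" "(r, s) \<in> {(0,0),(0,1),(1,1)}"
proof -
  from assms consider "t \<in> W n" | "t \<in> B' n" | "t \<in> G n" | "t \<in> Y n" | "t \<in> A n"
    | "t \<in> hat ` B' n" | "t \<in> hat ` G n" | "t \<in> hat ` Y n" | "t \<in> hat ` A n" | "t \<in> J' n"
    unfolding T'_def by blast
  then show ?thesis
  proof cases
    case 1 then show ?thesis using that(1) unfolding W_def by blast
  next
    case 2 then show ?thesis using that(2) unfolding B'_def by blast
  next
    case 3 then show ?thesis using that(3) unfolding G_def by blast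
  next
    case 4 then show ?thesis using that(4) unfolding Y_def by blast
  next
    case 5 then show ?thesis using that(5) unfolding A_def by blast
  next
    case 6 then show ?thesis using that(6) unfolding B'_def by auto
  next
    case 7 then show ?thesis using that(7) unfolding G_def by auto
  next
    case 8 then show ?thesis using that(8) unfolding Y_def by auto
  next
    case 9 then show ?thesis using that(9) unfolding A_def by auto
  next
    case 10 then show ?thesis using that(10) unfolding J'_def junction_pairs_def by blast
  qed
qed

lemma tl_v0h: "t \<in> T' n \<Longrightarrow> fst (RIGHT t) = fst (LEFT t)"
  by (erule T'E) auto
lemma tl_v0v: "t \<in> T' n \<Longrightarrow> fst (TOP t) = fst (BOTTOM t)"
  by (erule T'E) auto
lemma J'_T': "t \<in> J' n \<Longrightarrow> t \<in> T' n"
  unfolding T'_def by blast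
lemma J'E: assumes "t \<in> J' n"
  obtains k l r s where "t = ((0,k,l),(0,r,s),(0,s,r + int n),(0,l,k + int n))"
      "(k, l) \<in> {(0,0),(0,1),(1,1)}" "(r, s) \<in> {(0,0),(0,1),(1,1)}"
  using assms unfolding J'_def junction_pairs_def by blast
lemma tl_J: "t \<in> T' n \<Longrightarrow> t \<in> J' n \<longleftrightarrow> fst (LEFT t) = 0 \<and> fst (BOTTOM t) = 0"
  apply (rule iffI)
   apply (erule J'E, auto)[1]
  apply (erule T'E, auto simp: J'_def junction_pairs_def)
  done
lemma tl_vstep: "t \<in> T' n \<Longrightarrow> fst (LEFT t) \<noteq> 0 \<Longrightarrow> snd (snd (TOP t)) = snd (snd (BOTTOM t)) + 1"
  by (erule T'E) auto
lemma tl_range: "t \<in> T' n \<Longrightarrow> n \<ge> 1 \<Longrightarrow>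
   0 \<le> snd (snd (TOP t)) \<and> snd (snd (BOTTOM t)) \<le> int n + 1"
  by (erule T'E) auto
lemma tl_Jb: "t \<in> J' n \<Longrightarrow> snd (snd (TOP t)) \<le> 1 \<and> snd (snd (BOTTOM t)) \<ge> int n"
  by (erule J'E) auto
lemma tl_S: "t \<in> T' n \<Longrightarrow> fst (LEFT t) = 0 \<Longrightarrow> fst (BOTTOM t) \<noteq> 0 \<Longrightarrow> snd (snd (TOP t)) \<ge> 1"
  by (erule T'E) auto
lemma tl_JJh: "t1 \<in> J' n \<Longrightarrow> t2 \<in> J' n \<Longrightarrow> RIGHT t1 = LEFT t2 \<Longrightarrow> n \<le> 1"
  by (erule J'E, erule J'E) auto

lemma n1_t1: "t \<in> T' 1 \<Longrightarrow> BOTTOM t = (0,0,0) \<Longrightarrow> fst (LEFT t) \<noteq> 0 \<Longrightarrow>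
   t = ((1,1,1),(0,0,1),(1,1,1),(0,0,0)) \<or> t = ((1,1,1),(0,1,1),(1,1,2),(0,0,0))"
  by (erule T'E) auto
lemma n1_t2: "t \<in> T' 1 \<Longrightarrow> TOP t = (0,1,2) \<Longrightarrow> fst (LEFT t) \<noteq> 0 \<Longrightarrow>
   t = ((1,1,1),(0,1,2),(1,1,2),(0,0,1)) \<or> t = ((1,1,2),(0,1,2),(1,1,2),(0,1,1))"
  by (erule T'E) auto
lemma n1_J: "t0 \<in> J' 1 \<Longrightarrow> t3 \<in> J' 1 \<Longrightarrow> snd (snd (BOTTOM t3)) = snd (snd (TOP t0)) + 2 \<Longrightarrow>
   TOP t0 = (0,0,0) \<and> BOTTOM t3 = (0,1,2)"
  by (erule J'E, erule J'E) auto


lemma hat_hat[simp]: "hat (hat t) = t"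
  by (cases t) auto
lemma hat_sides[simp]: "RIGHT (hat t) = TOP t" "TOP (hat t) = RIGHT t"
  "LEFT (hat t) = BOTTOM t" "BOTTOM (hat t) = LEFT t"
  by (cases t; auto)+
lemma hat_W: "t \<in> W n \<Longrightarrow> hat t \<in> W n"
  unfolding W_def by auto
lemma hat_J: "t \<in> J' n \<Longrightarrow> hat t \<in> J' n"
  unfolding J'_def by auto
lemma tl_hat: "t \<in> T' n \<Longrightarrow> hat t \<in> T' n"
proof -
  assume "t \<in> T' n"
  then consider "t \<in> W n" | "t \<in> B' n" | "t \<in> G n" | "t \<in> Y n" | "t \<in> A n"
    | "t \<in> hat ` B' n" | "t \<in> hat ` G n" | "t \<in> hat ` Y n" | "t \<in> hat ` A n" | "t \<in> J' n"
    unfolding T'_def by blast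
  then show ?thesis
    by cases (auto simp: T'_def hat_W hat_J)
qed

definition rowJS :: "(int \<times> int \<Rightarrow> tile) \<Rightarrow> int \<Rightarrow> bool" where
  "rowJS x b \<longleftrightarrow> fst (LEFT (x (0, b))) = 0"
definition colJH :: "(int \<times> int \<Rightarrow> tile) \<Rightarrow> int \<Rightarrow> bool" where
  "colJH x a \<longleftrightarrow> fst (BOTTOM (x (a, 0))) = 0"
definition tr :: "(int \<times> int \<Rightarrow> tile) \<Rightarrow> int \<times> int \<Rightarrow> tile" where
  "tr x = (\<lambda>(a, b). hat (x (b, a)))"
definition nxt :: "(int \<Rightarrow> bool) \<Rightarrow> int \<Rightarrow> int" where
  "nxt P b = b + 1 + int (LEAST d. P (b + 1 + int d))"

lemma Om_T: "x \<in> Omega' n \<Longrightarrow> x m \<in> T' n"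
  unfolding Omega'_def mem_Collect_eq by blast
lemma Om_h: "x \<in> Omega' n \<Longrightarrow> RIGHT (x (a, b)) = LEFT (x (a + 1, b))"
  unfolding Omega'_def by auto
lemma Om_v: "x \<in> Omega' n \<Longrightarrow> TOP (x (a, b)) = BOTTOM (x (a, b + 1))"
  unfolding Omega'_def by auto

lemma int_const: assumes "\<And>a::int. f (a + 1) = f a" shows "f a = f 0"
proof (induct a rule: int_induct[where k=0])
  case base then show ?case by simp
next
  case (step1 i) then show ?case using assms[of i] by simp
next
  case (step2 i) then show ?case using assms[of "i - 1"] by simp
qed

lemma rowJS_all: assumes "x \<in> Omega' n" shows "(fst (LEFT (x (a, b))) = 0) = rowJS x b"
proof -
  have "(\<lambda>a. fst (LEFT (x (a, b)))) a = (\<lambda>a. fst (LEFT (x (a, b)))) 0"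
    by (rule int_const) (simp add: Om_h[OF assms, symmetric] tl_v0h[OF Om_T[OF assms]])
  then show ?thesis unfolding rowJS_def by simp
qed

lemma colJH_all: assumes "x \<in> Omega' n" shows "(fst (BOTTOM (x (a, b))) = 0) = colJH x a"
proof -
  have "(\<lambda>b. fst (BOTTOM (x (a, b)))) b = (\<lambda>b. fst (BOTTOM (x (a, b)))) 0"
    by (rule int_const) (simp add: Om_v[OF assms, symmetric] tl_v0v[OF Om_T[OF assms]])
  then show ?thesis unfolding colJH_def by simp
qed

lemma J_iff: "x \<in> Omega' n \<Longrightarrow> x (a, b) \<in> J' n \<longleftrightarrow> colJH x a \<and> rowJS x b"
  using tl_J[OF Om_T] rowJS_all colJH_all by metis

lemma tr_Om: assumes "x \<in> Omega' n" shows "tr x \<in> Omega' n"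
  unfolding Omega'_def tr_def using Om_T[OF assms] Om_h[OF assms] Om_v[OF assms]
  by (auto intro: tl_hat)

lemma rowJS_tr: "rowJS (tr x) = colJH x"
  unfolding rowJS_def colJH_def tr_def by auto

lemma vchain: assumes "x \<in> Omega' n" "\<forall>y. b < y \<and> y < b + 1 + int d \<longrightarrow> \<not> rowJS x y"
  shows "snd (snd (BOTTOM (x (a, b + 1 + int d)))) = snd (snd (TOP (x (a, b)))) + int d"
  using assms(2)
proof (induct d)
  case 0 then show ?case using Om_v[OF assms(1), of a b] by simp
next
  case (Suc d)
  have ih: "snd (snd (BOTTOM (x (a, b + 1 + int d)))) = snd (snd (TOP (x (a, b)))) + int d"
    using Suc by auto
  have nr: "\<not> rowJS x (b + 1 + int d)" using Suc(2) by auto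
  have "fst (LEFT (x (a, b + 1 + int d))) \<noteq> 0" using nr rowJS_all[OF assms(1)] by blast
  then have st: "snd (snd (TOP (x (a, b + 1 + int d)))) = snd (snd (BOTTOM (x (a, b + 1 + int d)))) + 1"
    using tl_vstep Om_T[OF assms(1)] by blast
  have "BOTTOM (x (a, b + 1 + int (Suc d))) = TOP (x (a, b + 1 + int d))"
    using Om_v[OF assms(1), of a "b + 1 + int d"] by (simp add: add.assoc)
  then show ?case using ih st by simp
qed

lemma synd: assumes "n \<ge> 1" "x \<in> Omega' n" shows "\<exists>d. d \<le> n + 1 \<and> rowJS x (b + int d)"
proof (rule ccontr)
  assume nt: "\<not> ?thesis"
  have H: "\<forall>y. (b - 1) < y \<and> y < (b - 1) + 1 + int (n + 2) \<longrightarrow> \<not> rowJS x y"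
  proof (intro allI impI)
    fix y assume y: "b - 1 < y \<and> y < b - 1 + 1 + int (n + 2)"
    then have "nat (y - b) \<le> n + 1" "y = b + int (nat (y - b))" by auto
    then show "\<not> rowJS x y" using nt by metis
  qed
  have "snd (snd (BOTTOM (x (0, b - 1 + 1 + int (n + 2))))) = snd (snd (TOP (x (0, b - 1)))) + int (n + 2)"
    by (rule vchain[OF assms(2) H])
  moreover have "0 \<le> snd (snd (TOP (x (0, b - 1))))" using tl_range[OF Om_T[OF assms(2)] assms(1)] by blast
  moreover have "snd (snd (BOTTOM (x (0, b - 1 + 1 + int (n + 2))))) \<le> int n + 1"
    using tl_range[OF Om_T[OF assms(2)] assms(1)] by blast
  ultimately show False by simp
qed



lemma nxt_gt: "b < nxt P b"
  unfolding nxt_def by simp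

lemma nxt_P: assumes "\<forall>b. \<exists>c>b. P c" shows "P (nxt P b)"
proof -
  obtain c where c: "c > b" "P c" using assms by blast
  then have "P (b + 1 + int (nat (c - b - 1)))" by simp
  then show ?thesis unfolding nxt_def by (rule LeastI)
qed

lemma nxt_between: assumes "b < y" "y < nxt P b" shows "\<not> P y"
proof
  assume py: "P y"
  have y: "y = b + 1 + int (nat (y - b - 1))" using assms(1) by simp
  have "nat (y - b - 1) < (LEAST d. P (b + 1 + int d))" using assms unfolding nxt_def by simp
  moreover have "P (b + 1 + int (nat (y - b - 1)))" using py y by simp
  ultimately show False using not_less_Least by blast
qed

lemma cover: assumes "\<forall>b. \<exists>c>b. P c" "\<forall>b. \<exists>c\<le>b. P c"
  shows "\<exists>b. P b \<and> b \<le> q \<and> q < nxt P b"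
proof -
  obtain c where c: "c \<le> q" "P c" using assms(2) by blast
  then have ex: "P (q - int (nat (q - c)))" by simp
  define d0 where "d0 = (LEAST d. P (q - int d))"
  have pb: "P (q - int d0)" unfolding d0_def using ex by (rule LeastI)
  have "q < nxt P (q - int d0)"
  proof (rule ccontr)
    assume "\<not> ?thesis"
    then have le: "nxt P (q - int d0) \<le> q" by simp
    have gt: "q - int d0 < nxt P (q - int d0)" by (rule nxt_gt)
    have "P (nxt P (q - int d0))" using nxt_P[OF assms(1)] by blast
    then have "P (q - int (nat (q - nxt P (q - int d0))))" using le by simp
    then have "d0 \<le> nat (q - nxt P (q - int d0))" unfolding d0_def by (rule Least_le)
    then show False using gt le by linarith
  qed
  then show ?thesis using pb by (intro exI[of _ "q - int d0"]) simp
qed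

lemma cover_uniq: assumes "P b1" "P b2" "b1 \<le> q" "q < nxt P b1" "b2 \<le> q" "q < nxt P b2"
  shows "b1 = b2"
proof (rule ccontr)
  assume "b1 \<noteq> b2"
  then consider "b1 < b2" | "b2 < b1" by linarith
  then show False
  proof cases
    case 1 then show False using nxt_between[of b1 b2 P] assms by simp
  next
    case 2 then show False using nxt_between[of b2 b1 P] assms by simp
  qed
qed

lemma unb_above: "n \<ge> 1 \<Longrightarrow> x \<in> Omega' n \<Longrightarrow> \<forall>b. \<exists>c>b. rowJS x c"
proof
  fix b assume "n \<ge> 1" "x \<in> Omega' n"
  then obtain d where "rowJS x (b + 1 + int d)" using synd by blast
  then show "\<exists>c>b. rowJS x c" by (intro exI[of _ "b + 1 + int d"]) simp
qed

lemma unb_below: "n \<ge> 1 \<Longrightarrow> x \<in> Omega' n \<Longrightarrow> \<forall>b. \<exists>c\<le>b. rowJS x c"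
proof
  fix b assume "n \<ge> 1" "x \<in> Omega' n"
  then obtain d where "d \<le> n + 1" "rowJS x (b - int (n + 1) + int d)" using synd by blast
  then show "\<exists>c\<le>b. rowJS x c" by (intro exI[of _ "b - int (n + 1) + int d"]) simp
qed

lemma n1_case: assumes x: "x \<in> Omega' 1" and r0: "rowJS x b" and r3: "rowJS x (b + 3)"
  and r1: "\<not> rowJS x (b + 1)" and r2: "\<not> rowJS x (b + 2)" and allc: "\<forall>a. colJH x a"
  shows False
proof -
  have key: "LEFT (x (a, b + 2)) = (1,1,2) \<and> (RIGHT (x (a, b + 2)) = (1,1,2) \<longrightarrow>
      RIGHT (x (a, b + 1)) = (1,1,1) \<and> LEFT (x (a, b + 1)) = (1,1,2))" for a
  proof -
    have j0: "x (a, b) \<in> J' 1" using J_iff[OF x] r0 allc by blast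
    have j3: "x (a, b + 3) \<in> J' 1" using J_iff[OF x] r3 allc by blast
    have H: "\<forall>y. b < y \<and> y < b + 1 + int 2 \<longrightarrow> \<not> rowJS x y"
    proof (intro allI impI)
      fix y assume "b < y \<and> y < b + 1 + int 2"
      then have "y = b + 1 \<or> y = b + 2" by auto
      then show "\<not> rowJS x y" using r1 r2 by auto
    qed
    have "snd (snd (BOTTOM (x (a, b + 1 + int 2)))) = snd (snd (TOP (x (a, b)))) + int 2"
      by (rule vchain[OF x H])
    then have c: "snd (snd (BOTTOM (x (a, b + 3)))) = snd (snd (TOP (x (a, b)))) + 2"
      by (simp add: add.assoc)
    from n1_J[OF j0 j3 c] have tb: "TOP (x (a, b)) = (0,0,0)" "BOTTOM (x (a, b + 3)) = (0,1,2)" by auto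
    have l1: "fst (LEFT (x (a, b + 1))) \<noteq> 0" using r1 rowJS_all[OF x] by blast
    have l2: "fst (LEFT (x (a, b + 2))) \<noteq> 0" using r2 rowJS_all[OF x] by blast
    have b1: "BOTTOM (x (a, b + 1)) = (0,0,0)" using tb Om_v[OF x, of a b] by simp
    have t2: "TOP (x (a, b + 2)) = (0,1,2)" using tb Om_v[OF x, of a "b + 2"] by (simp add: add.assoc)
    have m: "TOP (x (a, b + 1)) = BOTTOM (x (a, b + 2))" using Om_v[OF x, of a "b + 1"] by (simp add: add.assoc)
    from n1_t1[OF Om_T[OF x] b1 l1] n1_t2[OF Om_T[OF x] t2 l2] m show ?thesis by auto
  qed
  have "RIGHT (x (a, b + 2)) = (1,1,2)" for a using key[of "a + 1"] Om_h[OF x, of a "b + 2"] by simp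
  then have "RIGHT (x (a, b + 1)) = (1,1,1) \<and> LEFT (x (a, b + 1)) = (1,1,2)" for a using key by blast
  then show False using Om_h[OF x, of 0 "b + 1"] by simp
qed

lemma gap: assumes n: "n \<ge> 1" and x: "x \<in> Omega' n" and rb: "rowJS x b"
  shows "int n \<le> nxt (rowJS x) b - b \<and> nxt (rowJS x) b - b \<le> int n + 1"
proof -
  define b' where "b' = nxt (rowJS x) b"
  define d where "d = (LEAST d. rowJS x (b + 1 + int d))"
  have b'd: "b' = b + 1 + int d" unfolding b'_def d_def nxt_def by simp
  have rb': "rowJS x b'" unfolding b'_def using nxt_P[OF unb_above[OF n x]] by blast
  have H: "\<forall>y. b < y \<and> y < b + 1 + int d \<longrightarrow> \<not> rowJS x y"
    using nxt_between[of b _ "rowJS x"] b'd b'_def by auto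
  have ch: "snd (snd (BOTTOM (x (a, b')))) = snd (snd (TOP (x (a, b)))) + int d" for a
    using vchain[OF x H] b'd by simp
  obtain d0 where "rowJS (tr x) (0 + int d0)" using synd[OF n tr_Om[OF x]] by blast
  then have ca: "colJH x (int d0)" using rowJS_tr by simp
  have "x (int d0, b) \<in> J' n" "x (int d0, b') \<in> J' n" using J_iff[OF x] ca rb rb' by auto
  then have "snd (snd (TOP (x (int d0, b)))) \<le> 1" "int n \<le> snd (snd (BOTTOM (x (int d0, b'))))"
    using tl_Jb by blast+
  then have lo: "int n - 1 \<le> int d" using ch[of "int d0"] by simp
  have up0: "int d \<le> int n + 1"
    using ch[of 0] tl_range[OF Om_T[OF x] n, of "(0, b)"] tl_range[OF Om_T[OF x] n, of "(0, b')"] by simp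
  have up: "int d \<le> int n"
  proof (cases "\<exists>a. \<not> colJH x a")
    case True
    then obtain a where a: "\<not> colJH x a" by blast
    have "fst (LEFT (x (a, b))) = 0" using rb rowJS_all[OF x] by blast
    moreover have "fst (BOTTOM (x (a, b))) \<noteq> 0" using a colJH_all[OF x] by blast
    ultimately have "snd (snd (TOP (x (a, b)))) \<ge> 1" using tl_S[OF Om_T[OF x]] by blast
    then show ?thesis using ch[of a] tl_range[OF Om_T[OF x] n, of "(a, b')"] by simp
  next
    case False
    then have allc: "\<forall>a. colJH x a" by blast
    have "x (0, b) \<in> J' n" "x (1, b) \<in> J' n" using J_iff[OF x] allc rb by auto
    then have "n \<le> 1" using tl_JJh Om_h[OF x, of 0 b] by fastforce
    then have n1: "n = 1" using n by simp
    show ?thesis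
    proof (rule ccontr)
      assume "\<not> ?thesis"
      then have d2: "d = 2" using up0 n1 by simp
      have "\<not> rowJS x (b + 1)" "\<not> rowJS x (b + 2)" using H d2 by auto
      moreover have "rowJS x (b + 3)" using rb' b'd d2 by (simp add: add.commute)
      ultimately show False using n1_case[of x b] x n1 rb allc by simp
    qed
  qed
  show ?thesis using lo up b'd b'_def by simp
qed

lemma gapC: assumes n: "n \<ge> 1" and x: "x \<in> Omega' n" and ca: "colJH x a"
  shows "int n \<le> nxt (colJH x) a - a \<and> nxt (colJH x) a - a \<le> int n + 1"
  using gap[OF n tr_Om[OF x], of a] ca rowJS_tr by simp



theorem proposition6p4:
  fixes n :: nat and x :: "int \<times> int \<Rightarrow> tile"
  assumes "n \<ge> 1" and "x \<in> Omega' n"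
  shows "\<exists>!D. good_division n x D"
proof -
  note n = assms(1) and x = assms(2)
  define P where "P = rowJS x"
  define Q where "Q = colJH x"
  have Pa: "\<forall>b. \<exists>c>b. P c" and Pb: "\<forall>b. \<exists>c\<le>b. P c"
    using unb_above[OF n x] unb_below[OF n x] P_def by auto
  have Qa: "\<forall>b. \<exists>c>b. Q c" and Qb: "\<forall>b. \<exists>c\<le>b. Q c"
    using unb_above[OF n tr_Om[OF x]] unb_below[OF n tr_Om[OF x]] Q_def rowJS_tr by auto
  have gP: "P b \<Longrightarrow> int n \<le> nxt P b - b \<and> nxt P b - b \<le> int n + 1" for b
    using gap[OF n x] P_def by simp
  have gQ: "Q a \<Longrightarrow> int n \<le> nxt Q a - a \<and> nxt Q a - a \<le> int n + 1" for a
    using gapC[OF n x] Q_def by simp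
  have Jx: "x (a, b) \<in> J' n \<longleftrightarrow> Q a \<and> P b" for a b
    using J_iff[OF x] P_def Q_def by simp
  define D0 where "D0 = {((a, b), (nxt Q a - a, nxt P b - b)) | a b. Q a \<and> P b}"
  have cellsD0: "m \<in> cells ((a, b), (nxt Q a - a, nxt P b - b)) \<longleftrightarrow>
      a \<le> fst m \<and> fst m < nxt Q a \<and> b \<le> snd m \<and> snd m < nxt P b" for m a b
    by (cases m) auto
  have uniqD0: "\<exists>!B. B \<in> D0 \<and> m \<in> cells B" for m
  proof -
    obtain a where a: "Q a" "a \<le> fst m" "fst m < nxt Q a" using cover[OF Qa Qb] by blast
    obtain b where b: "P b" "b \<le> snd m" "snd m < nxt P b" using cover[OF Pa Pb] by blast
    show ?thesis
    proof (rule ex1I[of _ "((a, b), (nxt Q a - a, nxt P b - b))"])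
      show "((a, b), (nxt Q a - a, nxt P b - b)) \<in> D0 \<and> m \<in> cells ((a, b), (nxt Q a - a, nxt P b - b))"
        using a b cellsD0 unfolding D0_def by blast
    next
      fix B assume B: "B \<in> D0 \<and> m \<in> cells B"
      then obtain a' b' where B': "B = ((a', b'), (nxt Q a' - a', nxt P b' - b'))" "Q a'" "P b'"
        unfolding D0_def by blast
      then have "a' \<le> fst m \<and> fst m < nxt Q a' \<and> b' \<le> snd m \<and> snd m < nxt P b'"
        using B cellsD0 by blast
      then have "a' = a" "b' = b" using cover_uniq[of Q a' a "fst m"] cover_uniq[of P b' b "snd m"] a b B'
        by auto
      then show "B = ((a, b), (nxt Q a - a, nxt P b - b))" using B' by simp
    qed
  qed
  have blk: "fst (block_size B) \<in> {int n, int n + 1} \<and> snd (block_size B) \<in> {int n, int n + 1} \<and>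
     x (corner B) \<in> J' n \<and> (\<forall>m\<in>cells B. x m \<in> J' n \<longrightarrow> m = corner B)" if BD0: "B \<in> D0" for B
  proof -
    obtain a b where B: "B = ((a, b), (nxt Q a - a, nxt P b - b))" "Q a" "P b"
      using BD0 unfolding D0_def by blast
    have 1: "fst (block_size B) \<in> {int n, int n + 1}" using gQ[OF B(2)] B(1) by auto
    have 2: "snd (block_size B) \<in> {int n, int n + 1}" using gP[OF B(3)] B(1) by auto
    have 3: "x (corner B) \<in> J' n" using B Jx by simp
    have 4: "\<forall>m\<in>cells B. x m \<in> J' n \<longrightarrow> m = corner B"
    proof (intro ballI impI)
      fix m assume m: "m \<in> cells B" "x m \<in> J' n"
      obtain p q where pq: "m = (p, q)" by (cases m)
      have "Q p" "P q" using m(2) pq Jx by auto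
      moreover have "a \<le> p" "p < nxt Q a" "b \<le> q" "q < nxt P b" using m(1) B(1) pq cellsD0 by auto
      ultimately have "p = a" "q = b" using nxt_between[of a p Q] nxt_between[of b q P] by force+
      then show "m = corner B" using pq B(1) by simp
    qed
    show ?thesis using 1 2 3 4 by blast
  qed
  have good0: "good_division n x D0"
    unfolding good_division_def using blk uniqD0 by blast
  have uniq: "D = D0" if gD: "good_division n x D" for D
  proof -
    have sz: "\<forall>B\<in>D. fst (block_size B) \<in> {int n, int n + 1} \<and> snd (block_size B) \<in> {int n, int n + 1}"
      and cov: "\<forall>m. \<exists>!B. B \<in> D \<and> m \<in> cells B"
      and jn: "\<forall>B\<in>D. x (corner B) \<in> J' n \<and> (\<forall>m\<in>cells B. x m \<in> J' n \<longrightarrow> m = corner B)"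
      using gD unfolding good_division_def by blast+
    have sub: "B \<in> D0" if BD: "B \<in> D" for B
    proof -
      obtain a b w h where B: "B = ((a, b), (w, h))" by (metis prod.collapse)
      have wh: "w \<ge> 1" "h \<ge> 1" using sz BD B n by auto
      have QP: "Q a" "P b" using jn BD B Jx by auto
      have abB: "(a, b) \<in> cells B" using B wh by simp
      have w1: "w = nxt Q a - a"
      proof (rule ccontr)
        assume "w \<noteq> nxt Q a - a"
        then consider "nxt Q a < a + w" | "a + w < nxt Q a" by linarith
        then show False
        proof cases
          case 1
          have "(nxt Q a, b) \<in> cells B" using 1 B wh nxt_gt[of a Q] by simp
          moreover have "x (nxt Q a, b) \<in> J' n" using Jx QP nxt_P[OF Qa] by simp
          ultimately have "(nxt Q a, b) = (a, b)" using jn BD B by fastforce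
          then show False using nxt_gt[of a Q] by simp
        next
          case 2
          obtain B2 where B2: "B2 \<in> D" "(a + w, b) \<in> cells B2" using cov by blast
          obtain c d w2 h2 where B2e: "B2 = ((c, d), (w2, h2))" by (metis prod.collapse)
          have "Q c" using jn B2 B2e Jx by auto
          have inB2: "c \<le> a + w" "a + w < c + w2" "d \<le> b" "b < d + h2" using B2 B2e by auto
          have "c \<le> a"
          proof (rule ccontr)
            assume "\<not> c \<le> a"
            then have "a < c" "c < nxt Q a" using inB2 2 by auto
            then show False using nxt_between[of a c Q] \<open>Q c\<close> by simp
          qed
          then have "(a, b) \<in> cells B2" using inB2 wh B2e by simp
          then have "B2 = B" using cov abB BD B2(1) by blast
          then show False using B2(2) B by simp
        qed
      qed
      have h1: "h = nxt P b - b"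
      proof (rule ccontr)
        assume "h \<noteq> nxt P b - b"
        then consider "nxt P b < b + h" | "b + h < nxt P b" by linarith
        then show False
        proof cases
          case 1
          have "(a, nxt P b) \<in> cells B" using 1 B wh nxt_gt[of b P] by simp
          moreover have "x (a, nxt P b) \<in> J' n" using Jx QP nxt_P[OF Pa] by simp
          ultimately have "(a, nxt P b) = (a, b)" using jn BD B by fastforce
          then show False using nxt_gt[of b P] by simp
        next
          case 2
          obtain B2 where B2: "B2 \<in> D" "(a, b + h) \<in> cells B2" using cov by blast
          obtain c d w2 h2 where B2e: "B2 = ((c, d), (w2, h2))" by (metis prod.collapse)
          have "P d" using jn B2 B2e Jx by auto
          have inB2: "c \<le> a" "a < c + w2" "d \<le> b + h" "b + h < d + h2" using B2 B2e by auto
          have "d \<le> b"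
          proof (rule ccontr)
            assume "\<not> d \<le> b"
            then have "b < d" "d < nxt P b" using inB2 2 by auto
            then show False using nxt_between[of b d P] \<open>P d\<close> by simp
          qed
          then have "(a, b) \<in> cells B2" using inB2 wh B2e by simp
          then have "B2 = B" using cov abB BD B2(1) by blast
          then show False using B2(2) B by simp
        qed
      qed
      show "B \<in> D0" unfolding D0_def using B w1 h1 QP by blast
    qed
    have sup: "B0 \<in> D" if B0: "B0 \<in> D0" for B0
    proof -
      obtain a b where B0e: "B0 = ((a, b), (nxt Q a - a, nxt P b - b))" "Q a" "P b"
        using B0 unfolding D0_def by blast
      have "(a, b) \<in> cells B0" using B0e nxt_gt[of a Q] nxt_gt[of b P] by simp
      obtain B where B: "B \<in> D" "(a, b) \<in> cells B" using cov by blast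
      have "B \<in> D0" using sub B(1) .
      then have "B = B0" using uniqD0[of "(a, b)"] B(2) B0 \<open>(a, b) \<in> cells B0\<close> by blast
      then show ?thesis using B(1) by simp
    qed
    show "D = D0" using sub sup by blast
  qed
  show ?thesis using good0 uniq by blast
qed


end
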